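(* Let $\alpha>-1$, $\beta>-1$, $c>0$, $\omega_{\alpha,\beta}(x)=(1-x)^{\alpha}(1+x)^{\beta}$, $\mathcal{H}=L^2((-1,1),\omega_{\alpha,\beta}(x)dx)$, and $\mathcal{F}_c^{(\alpha,\beta)}[\phi](x)=\int_{-1}^{1}e^{c(xy-1)}\phi(y)\omega_{\alpha,\beta}(y)dy$ for $\phi\in\mathcal{H}$, $x\in(-1,1)$. Let $$LB^c_{\omega_{\alpha,\beta}}=\Big\{f(x)=\int_{-1}^{1}e^{c(xy-1)}g(y)\omega_{\alpha,\beta}(y)dy:\ g\in\mathcal{H}\Big\}$$ be the space of bilateral weighted Laplace bandlimited functions, equipped with the inner product $\langle f_1,f_2\rangle_{\widetilde{\mathcal H}}=\langle g_1,g_2\rangle_{\mathcal H}$ whenever $f_i=\mathcal{F}_c^{(\alpha,\beta)}[g_i]$, $g_i\in\mathcal{H}$. Let $\{\psi_n^{(\alpha,\beta)}(\cdot;c)\}_{n\ge0}$ be the eigenfunctions of $\mathcal{F}_c^{(\alpha,\beta)}$ with eigenvalues $\mu_n^{(\alpha,\beta)}(c)$, normalized so that $\int_{-1}^1\psi_n^{(\alpha,\beta)}(x;c)\psi_m^{(\alpha,\beta)}(x;c)\omega_{\alpha,\beta}(x)dx=(\mu_n^{(\alpha,\beta)}(c))^2\delta_{mn}$. Then $\{\psi_n^{(\alpha,\beta)}(\cdot;c)\}_{n=0}^\infty$ is a complete orthogonal system of $LB^c_{\omega_{\alpha,\beta}}$.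
   Context: The map $g\mapsto\mathcal{F}_c^{(\alpha,\beta)}[g]$ is injective on $\mathcal H$, so the inner product $\langle\cdot,\cdot\rangle_{\widetilde{\mathcal H}}$ on $LB^c_{\omega_{\alpha,\beta}}$ is well defined. $\delta_{mn}$ is the Kronecker delta. *)

theory Defs
  imports "HOL-Analysis.Analysis"
begin

definition jac_w :: "real \<Rightarrow> real \<Rightarrow> real \<Rightarrow> real" where
  "jac_w \<alpha> \<beta> x = (1 - x) powr \<alpha> * (1 + x) powr \<beta>"

definition jac_M :: "real \<Rightarrow> real \<Rightarrow> real measure" where
  "jac_M \<alpha> \<beta> = density (restrict_space lborel {-1<..<1}) (\<lambda>x. ennreal (jac_w \<alpha> \<beta> x))"

definition inH :: "real \<Rightarrow> real \<Rightarrow> (real \<Rightarrow> real) \<Rightarrow> bool" where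
  "inH \<alpha> \<beta> g \<longleftrightarrow> g \<in> borel_measurable (jac_M \<alpha> \<beta>) \<and> integrable (jac_M \<alpha> \<beta>) (\<lambda>x. (g x)\<^sup>2)"

definition H_inner :: "real \<Rightarrow> real \<Rightarrow> (real \<Rightarrow> real) \<Rightarrow> (real \<Rightarrow> real) \<Rightarrow> real" where
  "H_inner \<alpha> \<beta> g1 g2 = (LINT x | jac_M \<alpha> \<beta>. g1 x * g2 x)"

definition Fc :: "real \<Rightarrow> real \<Rightarrow> real \<Rightarrow> (real \<Rightarrow> real) \<Rightarrow> real \<Rightarrow> real" where
  "Fc \<alpha> \<beta> c \<phi> x = (LINT y | jac_M \<alpha> \<beta>. exp (c * (x * y - 1)) * \<phi> y)"

text \<open>The space LB^c_omega: functions on (-1,1) of the form F_c[g], g in H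
  (values outside (-1,1) are irrelevant).\<close>
definition LB :: "real \<Rightarrow> real \<Rightarrow> real \<Rightarrow> (real \<Rightarrow> real) set" where
  "LB \<alpha> \<beta> c = {f. \<exists>g. inH \<alpha> \<beta> g \<and> (\<forall>x\<in>{-1<..<1}. f x = Fc \<alpha> \<beta> c g x)}"

text \<open>A preimage g in H of f (unique up to null sets by injectivity of F_c).\<close>
definition LB_pre :: "real \<Rightarrow> real \<Rightarrow> real \<Rightarrow> (real \<Rightarrow> real) \<Rightarrow> (real \<Rightarrow> real)" where
  "LB_pre \<alpha> \<beta> c f = (SOME g. inH \<alpha> \<beta> g \<and> (\<forall>x\<in>{-1<..<1}. f x = Fc \<alpha> \<beta> c g x))"

definition LB_inner :: "real \<Rightarrow> real \<Rightarrow> real \<Rightarrow> (real \<Rightarrow> real) \<Rightarrow> (real \<Rightarrow> real) \<Rightarrow> real" where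
  "LB_inner \<alpha> \<beta> c f1 f2 = H_inner \<alpha> \<beta> (LB_pre \<alpha> \<beta> c f1) (LB_pre \<alpha> \<beta> c f2)"

end

theory Submission
  imports Defs "HOL-Library.Diagonal_Subsequence"
begin

lemma wm: "(\<lambda>x. ennreal (jac_w \<alpha> \<beta> x)) \<in> borel_measurable (restrict_space lborel {-1<..<1})"
    unfolding jac_w_def by (intro measurable_restrict_space1) measurable
lemma e1: "emeasure (jac_M \<alpha> \<beta>) (space (jac_M \<alpha> \<beta>)) = (\<integral>\<^sup>+x. ennreal (jac_w \<alpha> \<beta> x) * indicator {-1<..<1} x \<partial>(restrict_space lborel {-1<..<1}))"
    unfolding jac_M_def space_density space_restrict_space space_lborel space_borel Int_UNIV_right
    by (rule emeasure_density[OF wm]) (simp add: sets_restrict_space_iff)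
lemma e2: "(\<integral>\<^sup>+x. ennreal (jac_w \<alpha> \<beta> x) * indicator {-1<..<1} x \<partial>(restrict_space lborel {-1<..<1})) = (\<integral>\<^sup>+x. (ennreal (jac_w \<alpha> \<beta> x) * indicator {-1<..<1} x) * indicator {-1<..<1} x \<partial>lborel)"
    by (rule nn_integral_restrict_space) simp
lemma e3: "(\<integral>\<^sup>+x. (ennreal (jac_w \<alpha> \<beta> x) * indicator {-1<..<1} x) * indicator {-1<..<1} x \<partial>lborel) = (\<integral>\<^sup>+x. ennreal (norm (indicator {-1<..<1} x * jac_w \<alpha> \<beta> x :: real)) \<partial>lborel)"
    by (intro nn_integral_cong) (auto simp: indicator_def jac_w_def)
lemma e4: "(\<integral>\<^sup>+x. ennreal (norm (indicator {-1<..<1} x * jac_w \<alpha> \<beta> x :: real)) \<partial>lborel) < \<infinity> \<Longrightarrow> finite_measure (jac_M \<alpha> \<beta>)"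
  apply (rule finite_measureI)
  using e1 e2 e3 by (metis infinity_ennreal_def less_irrefl)

locale jac =
  fixes \<alpha> \<beta> c :: real
  assumes a: "\<alpha> > -1" and b: "\<beta> > -1" and c: "c > 0"
begin

abbreviation "M \<equiv> jac_M \<alpha> \<beta>"

lemma space_M[simp]: "space M = {-1<..<1}"
  by (simp add: jac_M_def space_restrict_space)

lemma sets_M: "sets M = sets (restrict_space lborel {-1<..<1})"
  by (simp add: jac_M_def)

lemma meas_borel: "f \<in> borel_measurable borel \<Longrightarrow> f \<in> borel_measurable M"
  by (simp add: jac_M_def measurable_restrict_space1)

lemma pw_le: assumes "1 \<le> y" "y \<le> 2" shows "y powr (e::real) \<le> max 1 (2 powr e)"
proof (cases "e \<ge> 0")
  case True
  then have "y powr e \<le> 2 powr e" using assms by (intro powr_mono2) auto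
  then show ?thesis by linarith
next
  case False
  then have "y powr e \<le> y powr 0" using assms by (intro powr_mono) auto
  then show ?thesis using assms by simp
qed

lemma int_pw: assumes "e > -1" shows "integrable lborel (\<lambda>t. indicator {0<..2} t * t powr e :: real)"
proof -
  have "integrable lebesgue (\<lambda>t. indicator {0<..2} t *\<^sub>R t powr e :: real)"
    using assms by (intro nonnegative_absolutely_integrable_1 [unfolded set_integrable_def] integrable_on_powr_from_0') auto
  then show ?thesis
    by (subst integrable_completion[symmetric]) auto
qed

lemma finite_M: "finite_measure M"
proof -
  define Ka where "Ka = max 1 (2 powr \<alpha>)"
  define Kb where "Kb = max 1 (2 powr \<beta>)"
  have i1: "integrable lborel (\<lambda>x. indicator {0<..2} (1 + (-1) * x) * (1 + (-1) * x) powr \<alpha> :: real)"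
    by (rule lborel_integrable_real_affine[OF int_pw[OF a]]) simp
  have i2: "integrable lborel (\<lambda>x. indicator {0<..2} (1 + 1 * x) * (1 + 1 * x) powr \<beta> :: real)"
    by (rule lborel_integrable_real_affine[OF int_pw[OF b]]) simp
  have "integrable lborel (\<lambda>x. indicator {-1<..<1} x * jac_w \<alpha> \<beta> x :: real)"
  proof (rule Bochner_Integration.integrable_bound)
    show "integrable lborel (\<lambda>x. Ka * Kb * (indicator {0<..2} (1 + (-1) * x) * (1 + (-1) * x) powr \<alpha> +
       indicator {0<..2} (1 + 1 * x) * (1 + 1 * x) powr \<beta>) :: real)"
      using i1 i2 by (intro integrable_mult_right Bochner_Integration.integrable_add)
    show "(\<lambda>x. indicator {-1<..<1} x * jac_w \<alpha> \<beta> x :: real) \<in> borel_measurable lborel"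
      unfolding jac_w_def by (intro borel_measurable_times borel_measurable_indicator) auto
    show "AE x in lborel. norm (indicator {-1<..<1} x * jac_w \<alpha> \<beta> x :: real) \<le> norm (Ka * Kb * (indicator {0<..2} (1 + (-1) * x) * (1 + (-1) * x) powr \<alpha> +
       indicator {0<..2} (1 + 1 * x) * (1 + 1 * x) powr \<beta>) :: real)"
    proof (rule AE_I2)
      fix x :: real
      have Ka1: "Ka \<ge> 1" and Kb1: "Kb \<ge> 1" by (auto simp: Ka_def Kb_def)
      show "norm (indicator {-1<..<1} x * jac_w \<alpha> \<beta> x :: real) \<le> norm (Ka * Kb * (indicator {0<..2} (1 + (-1) * x) * (1 + (-1) * x) powr \<alpha> +
       indicator {0<..2} (1 + 1 * x) * (1 + 1 * x) powr \<beta>) :: real)"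
      proof (cases "x \<in> {-1<..<1}")
        case False then show ?thesis by simp
      next
        case True
        then have x: "-1 < x" "x < 1" by auto
        have A0: "0 \<le> (1 - x) powr \<alpha>" "0 \<le> (1 + x) powr \<beta>" by auto
        have "jac_w \<alpha> \<beta> x \<le> Ka * Kb * ((1 - x) powr \<alpha> + (1 + x) powr \<beta>)"
        proof (cases "x \<ge> 0")
          case True
          have "(1 + x) powr \<beta> \<le> Kb" unfolding Kb_def using x True by (intro pw_le) auto
          then have "jac_w \<alpha> \<beta> x \<le> (1 - x) powr \<alpha> * Kb" unfolding jac_w_def
            using A0 by (intro mult_left_mono) auto
          also have "\<dots> \<le> Ka * Kb * ((1 - x) powr \<alpha> + (1 + x) powr \<beta>)"
          proof -
            have "(1 - x) powr \<alpha> * Kb \<le> Ka * ((1 - x) powr \<alpha> * Kb)"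
              using mult_right_mono[of 1 Ka "(1 - x) powr \<alpha> * Kb"] Ka1 A0 Kb1 by simp
            also have "\<dots> \<le> Ka * Kb * ((1 - x) powr \<alpha> + (1 + x) powr \<beta>)"
              using A0 Ka1 Kb1 by (simp add: algebra_simps)
            finally show ?thesis .
          qed
          finally show ?thesis .
        next
          case False
          have "(1 - x) powr \<alpha> \<le> Ka" unfolding Ka_def using x False by (intro pw_le) auto
          then have "jac_w \<alpha> \<beta> x \<le> Ka * (1 + x) powr \<beta>" unfolding jac_w_def
            using A0 by (intro mult_right_mono) auto
          also have "\<dots> \<le> Ka * Kb * ((1 - x) powr \<alpha> + (1 + x) powr \<beta>)"
          proof -
            have "Ka * (1 + x) powr \<beta> \<le> Kb * (Ka * (1 + x) powr \<beta>)"
              using mult_right_mono[of 1 Kb "Ka * (1 + x) powr \<beta>"] Ka1 A0 Kb1 by simp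
            also have "\<dots> \<le> Ka * Kb * ((1 - x) powr \<alpha> + (1 + x) powr \<beta>)"
              using A0 Ka1 Kb1 by (simp add: algebra_simps)
            finally show ?thesis .
          qed
          finally show ?thesis .
        qed
        moreover have "0 \<le> jac_w \<alpha> \<beta> x" by (simp add: jac_w_def)
        ultimately show ?thesis using x True A0 Ka1 Kb1 by (simp add: indicator_def)
      qed
    qed
  qed
  then have "(\<integral>\<^sup>+x. ennreal (norm (indicator {-1<..<1} x * jac_w \<alpha> \<beta> x :: real)) \<partial>lborel) < \<infinity>"
    unfolding integrable_iff_bounded by blast
  then show ?thesis by (rule e4)
qed

end

lemma discr:
  fixes A B C :: real
  assumes "\<And>t. 0 \<le> t\<^sup>2 * A - 2 * t * B + C" and "A = 0 \<Longrightarrow> B = 0" and "A \<ge> 0"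
  shows "B\<^sup>2 \<le> A * C"
proof (cases "A = 0")
  case True then show ?thesis using assms(2) assms(1)[of 0] by simp
next
  case False
  then have Ap: "A > 0" using assms(3) by simp
  have "0 \<le> (B/A)\<^sup>2 * A - 2 * (B/A) * B + C" by (rule assms(1))
  also have "\<dots> = (A * C - B\<^sup>2) / A" using Ap by (simp add: field_simps power2_eq_square)
  finally have "0 \<le> (A * C - B\<^sup>2) / A" .
  then show ?thesis using Ap by (simp add: zero_le_divide_iff)
qed

context jac
begin

abbreviation "ip \<equiv> H_inner \<alpha> \<beta>"

lemma finM: "emeasure M (space M) \<noteq> \<infinity>"
  using finite_M by (simp add: finite_measure.emeasure_finite)

lemma int_const: "integrable M (\<lambda>x. r :: real)"
  using finite_M by (simp add: finite_measure.integrable_const)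

lemma inH_meas: "inH \<alpha> \<beta> g \<Longrightarrow> g \<in> borel_measurable M"
  unfolding inH_def by blast

lemma inH_sq: "inH \<alpha> \<beta> g \<Longrightarrow> integrable M (\<lambda>x. (g x)\<^sup>2)"
  unfolding inH_def by blast

lemma inH_int: assumes "inH \<alpha> \<beta> g" shows "integrable M g"
proof (rule Bochner_Integration.integrable_bound)
  show "integrable M (\<lambda>x. 1 + (g x)\<^sup>2)" using inH_sq[OF assms] int_const by auto
  show "g \<in> borel_measurable M" using inH_meas[OF assms] .
  show "AE x in M. norm (g x) \<le> norm (1 + (g x)\<^sup>2)"
  proof (rule AE_I2)
    fix x
    have h: "0 \<le> (\<bar>g x\<bar> - 1)\<^sup>2" by simp
    have e: "\<bar>g x\<bar> * \<bar>g x\<bar> = (g x)\<^sup>2" by (simp add: power2_eq_square)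
    have "0 \<le> \<bar>g x\<bar> * \<bar>g x\<bar> - 2 * \<bar>g x\<bar> + 1" using h by (simp add: power2_eq_square algebra_simps)
    then have "\<bar>g x\<bar> \<le> 1 + (g x)\<^sup>2" using e by linarith
    then show "norm (g x) \<le> norm (1 + (g x)\<^sup>2)" by simp
  qed
qed

lemma inH_prod: assumes "inH \<alpha> \<beta> f" "inH \<alpha> \<beta> g" shows "integrable M (\<lambda>x. f x * g x)"
proof (rule Bochner_Integration.integrable_bound)
  show "integrable M (\<lambda>x. (f x)\<^sup>2 + (g x)\<^sup>2)" using inH_sq[OF assms(1)] inH_sq[OF assms(2)] by auto
  show "(\<lambda>x. f x * g x) \<in> borel_measurable M" using inH_meas[OF assms(1)] inH_meas[OF assms(2)] by (rule borel_measurable_times)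
  show "AE x in M. norm (f x * g x) \<le> norm ((f x)\<^sup>2 + (g x)\<^sup>2)"
  proof (rule AE_I2)
    fix x
    have "0 \<le> (\<bar>f x\<bar> - \<bar>g x\<bar>)\<^sup>2" by simp
    then have "\<bar>f x\<bar> * \<bar>g x\<bar> * 2 \<le> f x * f x + g x * g x"
      by (simp add: power2_eq_square algebra_simps)
    moreover have "0 \<le> \<bar>f x\<bar> * \<bar>g x\<bar>" by simp
    ultimately have "\<bar>f x\<bar> * \<bar>g x\<bar> \<le> f x * f x + g x * g x" by linarith
    then have "\<bar>f x * g x\<bar> \<le> (f x)\<^sup>2 + (g x)\<^sup>2"
      by (simp add: power2_eq_square abs_mult)
    then show "norm (f x * g x) \<le> norm ((f x)\<^sup>2 + (g x)\<^sup>2)" by simp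
  qed
qed

lemma inH_add: assumes "inH \<alpha> \<beta> f" "inH \<alpha> \<beta> g" shows "inH \<alpha> \<beta> (\<lambda>x. f x + g x)"
proof -
  have i2: "integrable M (\<lambda>x. 2 * f x * g x)"
    using integrable_mult_right[OF inH_prod[OF assms], of 2] by (simp add: mult.assoc)
  have "integrable M (\<lambda>x. (f x)\<^sup>2 + (g x)\<^sup>2 + 2 * f x * g x)"
    using inH_sq[OF assms(1)] inH_sq[OF assms(2)] i2 by (intro Bochner_Integration.integrable_add)
  then have "integrable M (\<lambda>x. (f x + g x)\<^sup>2)"
    by (simp add: power2_sum)
  moreover have "(\<lambda>x. f x + g x) \<in> borel_measurable M" using inH_meas[OF assms(1)] inH_meas[OF assms(2)] by (rule borel_measurable_add)
  ultimately show ?thesis unfolding inH_def by blast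
qed

lemma inH_scale: assumes "inH \<alpha> \<beta> f" shows "inH \<alpha> \<beta> (\<lambda>x. t * f x)"
proof -
  have "integrable M (\<lambda>x. t\<^sup>2 * (f x)\<^sup>2)" using inH_sq[OF assms] by auto
  then have "integrable M (\<lambda>x. (t * f x)\<^sup>2)" by (simp add: power_mult_distrib)
  moreover have "(\<lambda>x. t * f x) \<in> borel_measurable M" using inH_meas[OF assms] by (rule borel_measurable_times[OF borel_measurable_const])
  ultimately show ?thesis unfolding inH_def by blast
qed

lemma inH_diff: assumes "inH \<alpha> \<beta> f" "inH \<alpha> \<beta> g" shows "inH \<alpha> \<beta> (\<lambda>x. f x - g x)"
  using inH_add[OF assms(1) inH_scale[OF assms(2), of "-1"]] by simp

lemma inH_zero: "inH \<alpha> \<beta> (\<lambda>x. 0)"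
  unfolding inH_def by simp

lemma inH_sum: "(\<And>k. k \<in> K \<Longrightarrow> inH \<alpha> \<beta> (f k)) \<Longrightarrow> inH \<alpha> \<beta> (\<lambda>x. \<Sum>k\<in>K. f k x)"
proof (induction K rule: infinite_finite_induct)
  case (infinite A) then show ?case by (simp add: inH_zero)
next
  case empty then show ?case by (simp add: inH_zero)
next
  case (insert k K) then show ?case by (simp add: inH_add)
qed

lemma inH_bounded:
  assumes "g \<in> borel_measurable M" "\<And>x. x \<in> space M \<Longrightarrow> \<bar>g x\<bar> \<le> B"
  shows "inH \<alpha> \<beta> g"
proof -
  have "integrable M (\<lambda>x. (g x)\<^sup>2)"
  proof (rule Bochner_Integration.integrable_bound)
    show "integrable M (\<lambda>x. B\<^sup>2)" by (rule int_const)
    show "(\<lambda>x. (g x)\<^sup>2) \<in> borel_measurable M" by (intro borel_measurable_power assms(1))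
    show "AE x in M. norm ((g x)\<^sup>2) \<le> norm (B\<^sup>2)"
    proof (rule AE_I2)
      fix x assume "x \<in> space M"
      then have "\<bar>g x\<bar> \<le> B" by (rule assms(2))
      then have "\<bar>g x\<bar>\<^sup>2 \<le> B\<^sup>2" by (intro power_mono) auto
      then show "norm ((g x)\<^sup>2) \<le> norm (B\<^sup>2)" by simp
    qed
  qed
  then show ?thesis using assms unfolding inH_def by blast
qed

lemma ip_sym: "ip f g = ip g f"
  unfolding H_inner_def by (simp only: mult.commute)

lemma ip_nonneg: "ip f f \<ge> 0"
  by (simp add: H_inner_def)

lemma ip_zero_AE: assumes "inH \<alpha> \<beta> f" "ip f f = 0" shows "AE x in M. f x = 0"
proof -
  have "integrable M (\<lambda>x. f x * f x)" using inH_prod[OF assms(1) assms(1)] .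
  then have "AE x in M. f x * f x = 0"
    using assms(2) integral_nonneg_eq_0_iff_AE[of M "\<lambda>x. f x * f x"] by (simp add: H_inner_def)
  then show ?thesis by simp
qed

lemma ip_AE_zero: assumes "AE x in M. f x = 0" shows "ip f g = 0"
proof -
  have "AE x in M. f x * g x = 0" using assms by eventually_elim simp
  then show ?thesis unfolding H_inner_def by (rule integral_eq_zero_AE)
qed

lemma ip_lin:
  assumes "inH \<alpha> \<beta> f" "inH \<alpha> \<beta> g" "inH \<alpha> \<beta> h"
  shows "ip (\<lambda>x. s * f x + t * g x) h = s * ip f h + t * ip g h"
proof -
  have "ip (\<lambda>x. s * f x + t * g x) h = (LINT x|M. s * (f x * h x) + t * (g x * h x))"
    unfolding H_inner_def by (intro Bochner_Integration.integral_cong) (auto simp: algebra_simps)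
  also have "\<dots> = s * ip f h + t * ip g h"
    using inH_prod[OF assms(1,3)] inH_prod[OF assms(2,3)] by (simp add: H_inner_def)
  finally show ?thesis .
qed

lemma ip_sum:
  assumes "\<And>k. k \<in> K \<Longrightarrow> inH \<alpha> \<beta> (f k)" "inH \<alpha> \<beta> h"
  shows "ip (\<lambda>x. \<Sum>k\<in>K. a k * f k x) h = (\<Sum>k\<in>K. a k * ip (f k) h)"
proof -
  have "ip (\<lambda>x. \<Sum>k\<in>K. a k * f k x) h = (LINT x|M. (\<Sum>k\<in>K. a k * (f k x * h x)))"
    unfolding H_inner_def by (intro Bochner_Integration.integral_cong) (auto simp: sum_distrib_left sum_distrib_right mult_ac)
  also have "\<dots> = (\<Sum>k\<in>K. LINT x|M. a k * (f k x * h x))"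
  proof (rule Bochner_Integration.integral_sum)
    fix k assume "k \<in> K"
    then show "integrable M (\<lambda>x. a k * (f k x * h x))" by (intro integrable_mult_right inH_prod assms)
  qed
  also have "\<dots> = (\<Sum>k\<in>K. a k * ip (f k) h)"
    by (simp add: H_inner_def)
  finally show ?thesis .
qed

lemma CS: assumes "inH \<alpha> \<beta> f" "inH \<alpha> \<beta> g" shows "(ip f g)\<^sup>2 \<le> ip f f * ip g g"
proof (rule discr)
  fix t
  define L where "L = (\<lambda>x. t * f x + (-1) * g x)"
  have L: "inH \<alpha> \<beta> L" unfolding L_def by (intro assms inH_add inH_scale)
  have 1: "ip L L = t * ip f L + (-1) * ip g L"
    unfolding L_def by (intro ip_lin assms L[unfolded L_def])
  have 2: "ip f L = t * ip f f + (-1) * ip g f"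
    using ip_sym[of f L] ip_lin[OF assms assms(1), of t "-1"] unfolding L_def by simp
  have 3: "ip g L = t * ip f g + (-1) * ip g g"
    using ip_sym[of g L] ip_lin[OF assms assms(2), of t "-1"] unfolding L_def by simp
  have 4: "ip g f = ip f g" by (rule ip_sym)
  have "ip L L = t\<^sup>2 * ip f f - 2 * t * ip f g + ip g g"
    unfolding 1 2 3 4 by (simp add: power2_eq_square algebra_simps)
  then show "0 \<le> t\<^sup>2 * ip f f - 2 * t * ip f g + ip g g" using ip_nonneg[of L] by linarith
next
  assume "ip f f = 0"
  then show "ip f g = 0" using ip_zero_AE[OF assms(1)] ip_AE_zero by blast
qed (rule ip_nonneg)

end

definition ak :: "real \<Rightarrow> nat \<Rightarrow> real" where "ak c k = exp (-c) * c^k / fact k"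
definition mom :: "real measure \<Rightarrow> nat \<Rightarrow> (real \<Rightarrow> real) \<Rightarrow> real" where
  "mom N k g = (LINT y|N. y^k * g y)"

lemma exs: "(\<lambda>n. (y::real)^n / fact n) sums exp y"
  using exp_converges[of y] by (simp add: divide_inverse_commute)

lemma exs_abs: "summable (\<lambda>n. \<bar>y::real\<bar>^n / fact n)"
  using exs[of "\<bar>y\<bar>"] by (rule sums_summable)

context jac
begin

abbreviation "F \<equiv> Fc \<alpha> \<beta> c"
abbreviation L1 :: "(real \<Rightarrow> real) \<Rightarrow> real" where "L1 g \<equiv> (LINT x|M. \<bar>g x\<bar>)"

lemma ak_pos: "ak c k > 0"
  unfolding ak_def using c by simp

lemma ak_sums: "ak c sums 1"
proof -
  have "(\<lambda>n. exp (-c) * (c^n / fact n)) sums (exp (-c) * exp c)"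
    by (rule sums_mult[OF exs])
  then show ?thesis unfolding ak_def by (simp add: exp_minus_inverse mult.commute[of "exp (-c)"] times_divide_eq_right)
qed

lemma ak_x_summable: "summable (\<lambda>k. ak c k * \<bar>x\<bar>^k)"
proof -
  have "summable (\<lambda>n. exp (-c) * (\<bar>c*x\<bar>^n / fact n))"
    by (rule summable_mult[OF exs_abs])
  moreover have "\<And>n. exp (-c) * (\<bar>c*x\<bar>^n / fact n) = ak c n * \<bar>x\<bar>^n"
    unfolding ak_def using c by (simp add: abs_mult power_mult_distrib)
  ultimately show ?thesis by simp
qed

lemma meas_pow: "(\<lambda>y. y^k :: real) \<in> borel_measurable M"
  by (rule meas_borel) measurable

lemma abs_le1: "x \<in> space M \<Longrightarrow> \<bar>x\<bar> ^ k \<le> (1::real)"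
  by (intro power_le_one) auto

lemma int_poly: assumes "inH \<alpha> \<beta> g" shows "integrable M (\<lambda>y. y^k * g y)"
proof (rule Bochner_Integration.integrable_bound)
  show "integrable M (\<lambda>y. \<bar>g y\<bar>)" using inH_int[OF assms] by (rule integrable_abs)
  show "(\<lambda>y. y^k * g y) \<in> borel_measurable M" using meas_pow inH_meas[OF assms] by (rule borel_measurable_times)
  show "AE y in M. norm (y ^ k * g y) \<le> norm \<bar>g y\<bar>"
  proof (rule AE_I2)
    fix y assume "y \<in> space M"
    then have "\<bar>y\<bar>^k \<le> 1" by (rule abs_le1)
    then have "\<bar>y\<bar>^k * \<bar>g y\<bar> \<le> 1 * \<bar>g y\<bar>" by (intro mult_right_mono) auto
    then show "norm (y ^ k * g y) \<le> norm \<bar>g y\<bar>" by (simp add: abs_mult power_abs)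
  qed
qed

lemma L1_nonneg: "L1 g \<ge> 0" by (rule Bochner_Integration.integral_nonneg_AE) simp

lemma mom_bound: assumes "inH \<alpha> \<beta> g" shows "\<bar>mom M k g\<bar> \<le> L1 g"
proof -
  have "\<bar>mom M k g\<bar> \<le> (LINT y|M. \<bar>y^k * g y\<bar>)"
    unfolding mom_def using integral_abs_bound[of M "\<lambda>y. y^k * g y"] by simp
  also have "\<dots> \<le> L1 g"
  proof (rule integral_mono)
    show "integrable M (\<lambda>y. \<bar>y^k * g y\<bar>)" using int_poly[OF assms] by (rule integrable_abs)
    show "integrable M (\<lambda>y. \<bar>g y\<bar>)" using inH_int[OF assms] by (rule integrable_abs)
    fix y assume "y \<in> space M"
    then have "\<bar>y\<bar>^k \<le> 1" by (rule abs_le1)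
    then have "\<bar>y\<bar>^k * \<bar>g y\<bar> \<le> 1 * \<bar>g y\<bar>" by (intro mult_right_mono) auto
    then show "\<bar>y^k * g y\<bar> \<le> \<bar>g y\<bar>" by (simp add: abs_mult power_abs)
  qed
  finally show ?thesis .
qed

lemma mom_lin: assumes "inH \<alpha> \<beta> u" "inH \<alpha> \<beta> v"
  shows "mom M k (\<lambda>y. s * u y + t * v y) = s * mom M k u + t * mom M k v"
proof -
  have "mom M k (\<lambda>y. s * u y + t * v y) = (LINT y|M. s * (y^k * u y) + t * (y^k * v y))"
    unfolding mom_def by (intro Bochner_Integration.integral_cong) (auto simp: algebra_simps)
  also have "\<dots> = s * mom M k u + t * mom M k v"
    using int_poly[OF assms(1), of k] int_poly[OF assms(2), of k] by (simp add: mom_def)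
  finally show ?thesis .
qed


lemma F_sums: assumes g: "inH \<alpha> \<beta> g"
  shows "(\<lambda>k. ak c k * x^k * mom M k g) sums F g x"
proof -
  define f where "f k y = ak c k * x^k * (y^k * g y)" for k y
  have int: "integrable M (f k)" for k
    unfolding f_def by (intro integrable_mult_right int_poly g)
  have pt: "(\<lambda>k. f k y) sums (exp (c * (x * y - 1)) * g y)" for y
  proof -
    have "(\<lambda>k. exp (-c) * g y * ((c*x*y)^k / fact k)) sums (exp (-c) * g y * exp (c*x*y))"
      by (rule sums_mult[OF exs])
    moreover have "\<And>k. exp (-c) * g y * ((c*x*y)^k / fact k) = f k y"
      unfolding f_def ak_def by (simp add: power_mult_distrib)
    moreover have "exp (-c) * g y * exp (c*x*y) = exp (c * (x * y - 1)) * g y"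
      by (simp add: exp_add[symmetric] algebra_simps)
    ultimately show ?thesis by simp
  qed
  have sn: "summable (\<lambda>k. norm (f k y))" for y
  proof -
    have "summable (\<lambda>k. exp (-c) * \<bar>g y\<bar> * (\<bar>c*x*y\<bar>^k / fact k))"
      by (rule summable_mult[OF exs_abs])
    moreover have "\<And>k. exp (-c) * \<bar>g y\<bar> * (\<bar>c*x*y\<bar>^k / fact k) = norm (f k y)"
      unfolding f_def ak_def using c by (simp add: abs_mult power_mult_distrib power_abs)
    ultimately show ?thesis by simp
  qed
  have si: "summable (\<lambda>k. LINT y|M. norm (f k y))"
  proof (rule summable_comparison_test'[OF summable_mult2[OF ak_x_summable, of x "L1 g"]])
    fix k :: nat
    have "(LINT y|M. norm (f k y)) = ak c k * \<bar>x\<bar>^k * (LINT y|M. \<bar>y^k * g y\<bar>)"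
      unfolding f_def using ak_pos[of k] by (simp add: abs_mult power_abs)
    also have "\<dots> \<le> ak c k * \<bar>x\<bar>^k * L1 g"
    proof (rule mult_left_mono)
      show "0 \<le> ak c k * \<bar>x\<bar>^k" using ak_pos[of k] by simp
      show "(LINT y|M. \<bar>y^k * g y\<bar>) \<le> L1 g"
      proof (rule integral_mono)
        show "integrable M (\<lambda>y. \<bar>y^k * g y\<bar>)" using int_poly[OF g] by (rule integrable_abs)
        show "integrable M (\<lambda>y. \<bar>g y\<bar>)" using inH_int[OF g] by (rule integrable_abs)
        fix y assume "y \<in> space M"
        then have "\<bar>y\<bar>^k \<le> 1" by (rule abs_le1)
        then have "\<bar>y\<bar>^k * \<bar>g y\<bar> \<le> 1 * \<bar>g y\<bar>" by (intro mult_right_mono) auto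
        then show "\<bar>y^k * g y\<bar> \<le> \<bar>g y\<bar>" by (simp add: abs_mult power_abs)
      qed
    qed
    finally have "(LINT y|M. norm (f k y)) \<le> ak c k * \<bar>x\<bar>^k * L1 g" .
    then show "norm (LINT y|M. norm (f k y)) \<le> ak c k * \<bar>x\<bar>^k * L1 g"
      by (simp add: Bochner_Integration.integral_nonneg_AE)
  qed
  have "(\<lambda>k. integral\<^sup>L M (f k)) sums (LINT y|M. (\<Sum>k. f k y))"
    by (rule sums_integral[OF int AE_I2[OF sn] si])
  moreover have "\<And>k. integral\<^sup>L M (f k) = ak c k * x^k * mom M k g"
    unfolding f_def mom_def by simp
  moreover have "(LINT y|M. (\<Sum>k. f k y)) = F g x"
    unfolding Fc_def by (intro Bochner_Integration.integral_cong refl sums_unique[OF pt, symmetric])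
  ultimately show ?thesis by simp
qed

lemma F_eq: "inH \<alpha> \<beta> g \<Longrightarrow> F g x = (\<Sum>k. ak c k * x^k * mom M k g)"
  using F_sums sums_unique by blast

lemma F_meas: assumes g: "inH \<alpha> \<beta> g" shows "F g \<in> borel_measurable M"
proof (rule borel_measurable_LIMSEQ_real)
  fix x
  show "(\<lambda>n. \<Sum>k<n. ak c k * x^k * mom M k g) \<longlonglongrightarrow> F g x"
    using F_sums[OF g, of x] by (simp add: sums_def)
next
  fix n
  show "(\<lambda>x. \<Sum>k<n. ak c k * x^k * mom M k g) \<in> borel_measurable M"
    by (rule meas_borel) measurable
qed

lemma F_bound: assumes g: "inH \<alpha> \<beta> g" and x: "\<bar>x\<bar> \<le> 1" shows "\<bar>F g x\<bar> \<le> L1 g"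
proof -
  have b: "\<bar>ak c k * x^k * mom M k g\<bar> \<le> ak c k * L1 g" for k
  proof -
    have "\<bar>x\<bar>^k \<le> 1" using x by (intro power_le_one) auto
    moreover have "\<bar>mom M k g\<bar> \<le> L1 g" by (rule mom_bound[OF g])
    ultimately have "\<bar>x\<bar>^k * \<bar>mom M k g\<bar> \<le> 1 * L1 g"
      by (intro mult_mono) auto
    then show ?thesis using ak_pos[of k] by (simp add: abs_mult power_abs mult.assoc mult_left_mono)
  qed
  have s1: "summable (\<lambda>k. ak c k * L1 g)" using ak_sums by (intro summable_mult2 sums_summable)
  have s2: "summable (\<lambda>k. norm (ak c k * x^k * mom M k g))"
    by (rule summable_comparison_test'[OF s1]) (use b in simp)
  have "\<bar>F g x\<bar> = norm (\<Sum>k. ak c k * x^k * mom M k g)" using F_eq[OF g] by simp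
  also have "\<dots> \<le> (\<Sum>k. norm (ak c k * x^k * mom M k g))" by (rule summable_norm[OF s2])
  also have "\<dots> \<le> (\<Sum>k. ak c k * L1 g)" by (rule suminf_le[OF _ s2 s1]) (use b in simp)
  also have "\<dots> = L1 g" using sums_unique[OF sums_mult2[OF ak_sums, of "L1 g"]] by simp
  finally show ?thesis .
qed

lemma F_inH: assumes g: "inH \<alpha> \<beta> g" shows "inH \<alpha> \<beta> (F g)"
  by (rule inH_bounded[OF F_meas[OF g], of "L1 g"]) (rule F_bound[OF g], auto simp: abs_le_iff)

lemma F_lin: assumes "inH \<alpha> \<beta> u" "inH \<alpha> \<beta> v"
  shows "F (\<lambda>y. s * u y + t * v y) x = s * F u x + t * F v x"
proof -
  have "(\<lambda>k. s * (ak c k * x^k * mom M k u) + t * (ak c k * x^k * mom M k v)) sums (s * F u x + t * F v x)"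
    by (intro sums_add sums_mult F_sums assms)
  moreover have "\<And>k. s * (ak c k * x^k * mom M k u) + t * (ak c k * x^k * mom M k v) =
       ak c k * x^k * mom M k (\<lambda>y. s * u y + t * v y)"
    using mom_lin[OF assms] by (simp add: algebra_simps)
  ultimately have "(\<lambda>k. ak c k * x^k * mom M k (\<lambda>y. s * u y + t * v y)) sums (s * F u x + t * F v x)"
    by simp
  moreover have "inH \<alpha> \<beta> (\<lambda>y. s * u y + t * v y)" by (intro inH_add inH_scale assms)
  ultimately show ?thesis using F_sums sums_unique2 by blast
qed

end

context jac
begin

abbreviation P :: "(real \<Rightarrow> real) \<Rightarrow> (real \<Rightarrow> real) \<Rightarrow> real" where "P u v \<equiv> ip (F u) v"

lemma int_abs_poly_le: assumes g: "inH \<alpha> \<beta> g" shows "(LINT y|M. \<bar>y^k * g y\<bar>) \<le> L1 g"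
proof (rule integral_mono)
  show "integrable M (\<lambda>y. \<bar>y^k * g y\<bar>)" using int_poly[OF g] by (rule integrable_abs)
  show "integrable M (\<lambda>y. \<bar>g y\<bar>)" using inH_int[OF g] by (rule integrable_abs)
  fix y assume "y \<in> space M"
  then have "\<bar>y\<bar>^k \<le> 1" by (rule abs_le1)
  then have "\<bar>y\<bar>^k * \<bar>g y\<bar> \<le> 1 * \<bar>g y\<bar>" by (intro mult_right_mono) auto
  then show "\<bar>y^k * g y\<bar> \<le> \<bar>g y\<bar>" by (simp add: abs_mult power_abs)
qed

lemma ak_sq_nonneg: "0 \<le> ak c k * m * m"
  using mult_nonneg_nonneg[OF less_imp_le[OF ak_pos[of k]] zero_le_square[of m]] by (simp add: mult.assoc)

lemma P_sums: assumes u: "inH \<alpha> \<beta> u" and v: "inH \<alpha> \<beta> v"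
  shows "(\<lambda>k. ak c k * mom M k u * mom M k v) sums P u v"
proof -
  define f where "f k x = ak c k * mom M k u * (x^k * v x)" for k x
  have int: "integrable M (f k)" for k
    unfolding f_def by (intro integrable_mult_right int_poly v)
  have pt: "(\<lambda>k. f k x) sums (F u x * v x)" for x
  proof -
    have "(\<lambda>k. ak c k * x^k * mom M k u * v x) sums (F u x * v x)"
      by (rule sums_mult2[OF F_sums[OF u]])
    moreover have "\<And>k. ak c k * x^k * mom M k u * v x = f k x"
      unfolding f_def by (simp add: algebra_simps)
    ultimately show ?thesis by simp
  qed
  have sn: "summable (\<lambda>k. norm (f k x))" if x: "x \<in> space M" for x
  proof (rule summable_comparison_test'[OF summable_mult2[OF sums_summable[OF ak_sums], of "L1 u * \<bar>v x\<bar>"]])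
    fix k :: nat
    have "\<bar>x\<bar>^k \<le> 1" using x by (rule abs_le1)
    moreover have "\<bar>mom M k u\<bar> \<le> L1 u" by (rule mom_bound[OF u])
    ultimately have "\<bar>mom M k u\<bar> * (\<bar>x\<bar>^k * \<bar>v x\<bar>) \<le> L1 u * (1 * \<bar>v x\<bar>)"
      by (intro mult_mono mult_right_mono) auto
    then have "ak c k * (\<bar>mom M k u\<bar> * (\<bar>x\<bar>^k * \<bar>v x\<bar>)) \<le> ak c k * (L1 u * (1 * \<bar>v x\<bar>))"
      using ak_pos[of k] by (intro mult_left_mono) auto
    then show "norm (norm (f k x)) \<le> ak c k * (L1 u * \<bar>v x\<bar>)"
      unfolding f_def using ak_pos[of k] by (simp add: abs_mult power_abs)
  qed
  have si: "summable (\<lambda>k. LINT x|M. norm (f k x))"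
  proof (rule summable_comparison_test'[OF summable_mult2[OF sums_summable[OF ak_sums], of "L1 u * L1 v"]])
    fix k :: nat
    have "(LINT x|M. norm (f k x)) = ak c k * \<bar>mom M k u\<bar> * (LINT x|M. \<bar>x^k * v x\<bar>)"
      unfolding f_def using ak_pos[of k] by (simp add: abs_mult)
    also have "\<dots> \<le> ak c k * (L1 u * L1 v)"
    proof -
      have "\<bar>mom M k u\<bar> * (LINT x|M. \<bar>x^k * v x\<bar>) \<le> L1 u * L1 v"
        by (intro mult_mono mom_bound u int_abs_poly_le v L1_nonneg)
      then show ?thesis using ak_pos[of k] by (simp add: mult.assoc mult_left_mono)
    qed
    finally have "(LINT x|M. norm (f k x)) \<le> ak c k * (L1 u * L1 v)" .
    then show "norm (LINT x|M. norm (f k x)) \<le> ak c k * (L1 u * L1 v)"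
      by (simp add: Bochner_Integration.integral_nonneg_AE)
  qed
  have "(\<lambda>k. integral\<^sup>L M (f k)) sums (LINT x|M. (\<Sum>k. f k x))"
    by (rule sums_integral[OF int AE_I2[OF sn] si])
  moreover have "\<And>k. integral\<^sup>L M (f k) = ak c k * mom M k u * mom M k v"
    unfolding f_def mom_def by simp
  moreover have "(LINT x|M. (\<Sum>k. f k x)) = P u v"
    unfolding H_inner_def by (intro Bochner_Integration.integral_cong refl sums_unique[OF pt, symmetric])
  ultimately show ?thesis by simp
qed

lemma P_sym: assumes "inH \<alpha> \<beta> u" "inH \<alpha> \<beta> v" shows "P u v = P v u"
proof -
  have "(\<lambda>k. ak c k * mom M k u * mom M k v) sums P v u"
    using P_sums[OF assms(2,1)] by (simp add: mult_ac)
  then show ?thesis using P_sums[OF assms] sums_unique2 by blast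
qed

lemma P_nonneg: assumes "inH \<alpha> \<beta> u" shows "P u u \<ge> 0"
proof -
  have s: "(\<lambda>k. ak c k * mom M k u * mom M k u) sums P u u" by (rule P_sums[OF assms assms])
  have "0 \<le> (\<Sum>k. ak c k * mom M k u * mom M k u)"
    by (rule suminf_nonneg[OF sums_summable[OF s]]) (rule ak_sq_nonneg)
  then show ?thesis using sums_unique[OF s] by simp
qed

lemma P_zero_mom: assumes "inH \<alpha> \<beta> u" "P u u = 0" shows "mom M k u = 0"
proof -
  have s: "(\<lambda>k. ak c k * mom M k u * mom M k u) sums P u u" by (rule P_sums[OF assms(1) assms(1)])
  have nn: "\<forall>n. 0 \<le> ak c n * mom M n u * mom M n u" using ak_sq_nonneg by blast
  have "(\<Sum>k. ak c k * mom M k u * mom M k u) = 0" using sums_unique[OF s] assms(2) by simp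
  then have "\<forall>n. ak c n * mom M n u * mom M n u = 0"
    using suminf_eq_zero_iff[OF sums_summable[OF s]] nn by blast
  then have "ak c k = 0 \<or> mom M k u = 0" by simp
  then show ?thesis using ak_pos[of k] by auto
qed

lemma P_zero_F: assumes "inH \<alpha> \<beta> u" "P u u = 0" shows "F u x = 0"
  using F_eq[OF assms(1), of x] P_zero_mom[OF assms] by simp

lemma P_lin: assumes "inH \<alpha> \<beta> u" "inH \<alpha> \<beta> v" "inH \<alpha> \<beta> h"
  shows "P (\<lambda>y. s * u y + t * v y) h = s * P u h + t * P v h"
proof -
  have e: "F (\<lambda>y. s * u y + t * v y) = (\<lambda>x. s * F u x + t * F v x)"
    by (intro ext F_lin assms)
  have "P (\<lambda>y. s * u y + t * v y) h = ip (\<lambda>x. s * F u x + t * F v x) h"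
    by (simp only: e)
  also have "\<dots> = s * P u h + t * P v h"
    by (intro ip_lin F_inH assms)
  finally show ?thesis .
qed

lemma CS_P: assumes u: "inH \<alpha> \<beta> u" and v: "inH \<alpha> \<beta> v" shows "(P u v)\<^sup>2 \<le> P u u * P v v"
proof (rule discr)
  fix t
  define L where "L = (\<lambda>x. t * u x + (-1) * v x)"
  have L: "inH \<alpha> \<beta> L" unfolding L_def by (intro u v inH_add inH_scale)
  have 1: "P L L = t * P u L + (-1) * P v L"
    unfolding L_def by (intro P_lin u v L[unfolded L_def])
  have 2: "P u L = t * P u u + (-1) * P v u"
    using P_sym[OF u L] P_lin[OF u v u, of t "-1"] unfolding L_def by simp
  have 3: "P v L = t * P u v + (-1) * P v v"
    using P_sym[OF v L] P_lin[OF u v v, of t "-1"] unfolding L_def by simp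
  have 4: "P v u = P u v" by (rule P_sym[OF v u])
  have "P L L = t\<^sup>2 * P u u - 2 * t * P u v + P v v"
    unfolding 1 2 3 4 by (simp add: power2_eq_square algebra_simps)
  then show "0 \<le> t\<^sup>2 * P u u - 2 * t * P u v + P v v" using P_nonneg[OF L] by linarith
next
  assume "P u u = 0"
  then have "\<And>x. F u x = 0" by (rule P_zero_F[OF u])
  then show "P u v = 0" by (simp add: H_inner_def)
qed (rule P_nonneg[OF u])

end

lemma diag_extract:
  fixes \<beta> :: "nat \<Rightarrow> nat \<Rightarrow> real"
  assumes bd: "\<And>j k. \<bar>\<beta> j k\<bar> \<le> Bd"
  shows "\<exists>r. strict_mono r \<and> (\<forall>k. convergent (\<lambda>j. \<beta> (r j) k))"
proof -
  interpret subseqs "\<lambda>k s. convergent (\<lambda>j. \<beta> (s j) k)"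
  proof
    fix k and s :: "nat \<Rightarrow> nat" assume "strict_mono s"
    have "bounded (range (\<lambda>j. \<beta> (s j) k))"
      unfolding bounded_iff using bd by auto
    then obtain l r where r: "strict_mono r" and l: "((\<lambda>j. \<beta> (s j) k) \<circ> r) \<longlonglongrightarrow> l"
      using bounded_imp_convergent_subsequence by blast
    have "convergent (\<lambda>j. \<beta> ((s \<circ> r) j) k)"
      using l by (auto simp: convergent_def o_def)
    then show "\<exists>r'. strict_mono r' \<and> convergent (\<lambda>j. \<beta> ((s \<circ> r') j) k)" using r by blast
  qed
  have "\<forall>k. convergent (\<lambda>j. \<beta> (diagseq j) k)"
  proof
    fix k
    have "convergent (\<lambda>j. \<beta> ((diagseq \<circ> (+) (Suc k)) j) k)"
    proof (rule diagseq_holds)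
      fix r s n assume "strict_mono (r :: nat \<Rightarrow> nat)" "convergent (\<lambda>j. \<beta> (s j) n)"
      then show "convergent (\<lambda>j. \<beta> ((s \<circ> r) j) n)"
        using convergent_subseq_convergent[of "\<lambda>j. \<beta> (s j) n" r] by (simp add: o_def)
    qed
    then have "convergent (\<lambda>j. \<beta> (diagseq (j + Suc k)) k)" by (simp add: o_def add.commute)
    then show "convergent (\<lambda>j. \<beta> (diagseq j) k)"
      using convergent_ignore_initial_segment[of "\<lambda>j. \<beta> (diagseq j) k" "Suc k"] by simp
  qed
  then show ?thesis using subseq_diagseq by blast
qed

locale jacpsi = jac +
  fixes \<psi> :: "nat \<Rightarrow> real \<Rightarrow> real" and \<mu> :: "nat \<Rightarrow> real"
  assumes psiH: "\<forall>n. inH \<alpha> \<beta> (\<psi> n)"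
    and eig: "\<forall>n. \<forall>x\<in>{-1<..<1}. Fc \<alpha> \<beta> c (\<psi> n) x = \<mu> n * \<psi> n x"
    and nonzero: "\<forall>n. \<not> (AE x in jac_M \<alpha> \<beta>. \<psi> n x = 0)"
    and normalized: "\<forall>n m. H_inner \<alpha> \<beta> (\<psi> n) (\<psi> m) = (if m = n then (\<mu> n)\<^sup>2 else 0)"
    and alleig:
      "\<forall>\<phi> lam. inH \<alpha> \<beta> \<phi> \<and> (AE x in jac_M \<alpha> \<beta>. Fc \<alpha> \<beta> c \<phi> x = lam * \<phi> x)
              \<and> \<not> (AE x in jac_M \<alpha> \<beta>. \<phi> x = 0)
         \<longrightarrow> (\<exists>N a. AE x in jac_M \<alpha> \<beta>. \<phi> x = (\<Sum>k<N. a k * \<psi> k x))"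
begin

lemma psi_inH: "inH \<alpha> \<beta> (\<psi> n)" using psiH by blast

lemma mu_nz: "\<mu> n \<noteq> 0"
proof
  assume "\<mu> n = 0"
  then have "ip (\<psi> n) (\<psi> n) = 0" using normalized by simp
  then have "AE x in M. \<psi> n x = 0" by (rule ip_zero_AE[OF psi_inH])
  then show False using nonzero by blast
qed

lemma ip_psi_self: "ip (\<psi> n) (\<psi> n) = (\<mu> n)\<^sup>2" using normalized by simp
lemma ip_psi_orth: "n \<noteq> m \<Longrightarrow> ip (\<psi> n) (\<psi> m) = 0" using normalized by simp

lemma F_psi: "x \<in> space M \<Longrightarrow> F (\<psi> n) x = \<mu> n * \<psi> n x" using eig by simp

lemma P_psi: assumes g: "inH \<alpha> \<beta> g" shows "P (\<psi> n) g = \<mu> n * ip (\<psi> n) g"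
proof -
  have "P (\<psi> n) g = (LINT x|M. \<mu> n * (\<psi> n x * g x))"
    unfolding H_inner_def by (intro Bochner_Integration.integral_cong refl) (simp add: F_psi mult.assoc)
  also have "\<dots> = \<mu> n * ip (\<psi> n) g" unfolding H_inner_def by (rule integral_mult_right_zero)
  finally show ?thesis .
qed

lemma span_zero:
  assumes ph: "inH \<alpha> \<beta> \<phi>" and orth: "\<forall>j. ip \<phi> (\<psi> j) = 0"
    and ae: "AE x in M. \<phi> x = (\<Sum>k<N. a k * \<psi> k x)"
  shows "ip \<phi> \<phi> = 0"
proof -
  have sH: "inH \<alpha> \<beta> (\<lambda>x. \<Sum>k<N. a k * \<psi> k x)"
    by (intro inH_sum inH_scale psi_inH)
  have "ip \<phi> \<phi> = ip (\<lambda>x. \<Sum>k<N. a k * \<psi> k x) \<phi>"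
    unfolding H_inner_def
  proof (rule integral_cong_AE)
    show "(\<lambda>x. \<phi> x * \<phi> x) \<in> borel_measurable M"
      using inH_meas[OF ph] inH_meas[OF ph] by (rule borel_measurable_times)
    show "(\<lambda>x. (\<Sum>k<N. a k * \<psi> k x) * \<phi> x) \<in> borel_measurable M"
      using inH_meas[OF sH] inH_meas[OF ph] by (rule borel_measurable_times)
    show "AE x in M. \<phi> x * \<phi> x = (\<Sum>k<N. a k * \<psi> k x) * \<phi> x"
      using ae by eventually_elim simp
  qed
  also have "\<dots> = (\<Sum>k<N. a k * ip (\<psi> k) \<phi>)"
    by (intro ip_sum psi_inH ph)
  also have "\<dots> = 0" using orth by (simp add: ip_sym)
  finally show ?thesis .
qed

definition V :: "(real \<Rightarrow> real) \<Rightarrow> bool" where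
  "V g \<longleftrightarrow> inH \<alpha> \<beta> g \<and> (\<forall>n. ip g (\<psi> n) = 0)"

lemma V_inH: "V g \<Longrightarrow> inH \<alpha> \<beta> g" by (simp add: V_def)

lemma V_F: assumes "V g" shows "V (F g)"
proof -
  have g: "inH \<alpha> \<beta> g" using assms by (simp add: V_def)
  have "ip (F g) (\<psi> n) = 0" for n
  proof -
    have "ip (F g) (\<psi> n) = P (\<psi> n) g" by (rule P_sym[OF g psi_inH])
    also have "\<dots> = \<mu> n * ip g (\<psi> n)" using P_psi[OF g] ip_sym by metis
    also have "\<dots> = 0" using assms by (simp add: V_def)
    finally show ?thesis .
  qed
  then show ?thesis using F_inH[OF g] by (simp add: V_def)
qed

lemma V_lin: assumes "V u" "V v" shows "V (\<lambda>x. s * u x + t * v x)"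
proof -
  have u: "inH \<alpha> \<beta> u" and v: "inH \<alpha> \<beta> v" using assms by (auto simp: V_def)
  have "ip (\<lambda>x. s * u x + t * v x) (\<psi> n) = 0" for n
    using ip_lin[OF u v psi_inH, of s t n] assms by (simp add: V_def)
  then show ?thesis using inH_add[OF inH_scale[OF u] inH_scale[OF v]] by (simp add: V_def)
qed

lemma V_zero: "V (\<lambda>x. 0)"
  by (simp add: V_def inH_zero H_inner_def)

lemma F_zero_inj:
  assumes d: "inH \<alpha> \<beta> d" and z: "\<forall>x\<in>{-1<..<1}. F d x = 0"
  shows "AE x in M. d x = 0"
proof (rule ccontr)
  assume nz: "\<not> (AE x in M. d x = 0)"
  have orth: "ip d (\<psi> j) = 0" for j
  proof -
    have "\<mu> j * ip (\<psi> j) d = P (\<psi> j) d" using P_psi[OF d] by simp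
    also have "\<dots> = P d (\<psi> j)" by (rule P_sym[OF psi_inH d])
    also have "\<dots> = (LINT x|M. 0)" unfolding H_inner_def
      by (intro Bochner_Integration.integral_cong refl) (use z in simp)
    also have "\<dots> = 0" by simp
    finally show ?thesis using mu_nz[of j] ip_sym by (metis mult_eq_0_iff)
  qed
  have "AE x in M. F d x = 0 * d x" using z by (intro AE_I2) simp
  then obtain N a where "AE x in M. d x = (\<Sum>k<N. a k * \<psi> k x)"
    using alleig d nz by blast
  then have "ip d d = 0" using span_zero[OF d] orth by blast
  then show False using ip_zero_AE[OF d] nz by blast
qed

lemma F_inj:
  assumes g: "inH \<alpha> \<beta> g" and h: "inH \<alpha> \<beta> h" and eq: "\<forall>x\<in>{-1<..<1}. F g x = F h x"
  shows "AE x in M. g x = h x"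
proof -
  have d: "inH \<alpha> \<beta> (\<lambda>y. 1 * g y + (-1) * h y)" by (intro inH_add inH_scale g h)
  have "\<forall>x\<in>{-1<..<1}. F (\<lambda>y. 1 * g y + (-1) * h y) x = 0"
    using eq F_lin[OF g h, of 1 "-1"] by simp
  then have "AE x in M. 1 * g x + (-1) * h x = 0" by (rule F_zero_inj[OF d])
  then show ?thesis by eventually_elim simp
qed

end

context jacpsi
begin

abbreviation W :: real where "W \<equiv> measure M (space M)"

lemma W_nonneg: "W \<ge> 0" by simp

lemma inH_one: "inH \<alpha> \<beta> (\<lambda>x. 1)"
  by (rule inH_bounded[of _ 1]) auto

lemma inH_abs: assumes g: "inH \<alpha> \<beta> g" shows "inH \<alpha> \<beta> (\<lambda>x. \<bar>g x\<bar>)"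
proof -
  have "integrable M (\<lambda>x. (\<bar>g x\<bar>)\<^sup>2)" using inH_sq[OF g] by simp
  moreover have "(\<lambda>x. \<bar>g x\<bar>) \<in> borel_measurable M" using inH_meas[OF g] by (rule borel_measurable_abs)
  ultimately show ?thesis unfolding inH_def by blast
qed

lemma L1_sq: assumes g: "inH \<alpha> \<beta> g" shows "(L1 g)\<^sup>2 \<le> W * ip g g"
proof -
  have "(ip (\<lambda>x. \<bar>g x\<bar>) (\<lambda>x. 1))\<^sup>2 \<le> ip (\<lambda>x. \<bar>g x\<bar>) (\<lambda>x. \<bar>g x\<bar>) * ip (\<lambda>x. 1) (\<lambda>x. 1)"
    by (rule CS[OF inH_abs[OF g] inH_one])
  moreover have "ip (\<lambda>x. \<bar>g x\<bar>) (\<lambda>x. 1) = L1 g" by (simp add: H_inner_def)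
  moreover have "ip (\<lambda>x. \<bar>g x\<bar>) (\<lambda>x. \<bar>g x\<bar>) = ip g g" by (simp add: H_inner_def abs_mult_self_eq)
  moreover have "ip (\<lambda>x. 1) (\<lambda>x. 1) = W" by (simp add: H_inner_def)
  ultimately show ?thesis by (simp add: mult.commute)
qed

lemma P_le_L1: assumes g: "inH \<alpha> \<beta> g" shows "P g g \<le> L1 g * L1 g"
proof -
  have "P g g \<le> (LINT x|M. L1 g * \<bar>g x\<bar>)"
    unfolding H_inner_def
  proof (rule integral_mono)
    show "integrable M (\<lambda>x. F g x * g x)" by (rule inH_prod[OF F_inH[OF g] g])
    show "integrable M (\<lambda>x. L1 g * \<bar>g x\<bar>)" by (intro integrable_mult_right integrable_abs inH_int g)
    fix x assume x: "x \<in> space M"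
    have "\<bar>F g x\<bar> \<le> L1 g" using x by (intro F_bound g) (auto simp: abs_le_iff)
    then have "\<bar>F g x\<bar> * \<bar>g x\<bar> \<le> L1 g * \<bar>g x\<bar>" by (rule mult_right_mono) simp
    then show "F g x * g x \<le> L1 g * \<bar>g x\<bar>" by (simp add: abs_mult[symmetric] abs_le_iff)
  qed
  also have "\<dots> = L1 g * L1 g" by simp
  finally show ?thesis .
qed

lemma P_le_W: assumes g: "inH \<alpha> \<beta> g" shows "P g g \<le> W * ip g g"
  using P_le_L1[OF g] L1_sq[OF g] by (simp add: power2_eq_square)

definition SS :: "real set" where "SS = {P g g | g. V g \<and> ip g g \<le> 1}"
definition sS :: real where "sS = Sup SS"

lemma P_zero_fun: "P (\<lambda>x. 0) (\<lambda>x. 0) = 0" by (simp add: H_inner_def)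

lemma SS_ne: "SS \<noteq> {}"
  unfolding SS_def using V_zero P_zero_fun by (auto simp: H_inner_def)

lemma SS_bdd: "bdd_above SS"
proof (rule bdd_aboveI)
  fix x assume "x \<in> SS"
  then obtain g where x: "x = P g g" and V: "V g" and n: "ip g g \<le> 1" unfolding SS_def by blast
  have "x \<le> W * ip g g" using P_le_W[OF V_inH[OF V]] x by simp
  also have "\<dots> \<le> W * 1" using n W_nonneg by (intro mult_left_mono) auto
  finally show "x \<le> W" by simp
qed

lemma SS_upper: "V g \<Longrightarrow> ip g g \<le> 1 \<Longrightarrow> P g g \<le> sS"
  unfolding sS_def by (rule cSup_upper[OF _ SS_bdd]) (auto simp: SS_def)

lemma sS_nonneg: "sS \<ge> 0"
  using SS_upper[OF V_zero] P_zero_fun by (simp add: H_inner_def)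

lemma F_scale: assumes h: "inH \<alpha> \<beta> h" shows "F (\<lambda>y. t * h y) x = t * F h x"
  using F_lin[OF h h, of t 0 x] by simp

lemma ip_scale2: "ip (\<lambda>x. t * h x) (\<lambda>x. t * h x) = t\<^sup>2 * ip h h"
proof -
  have "ip (\<lambda>x. t * h x) (\<lambda>x. t * h x) = (LINT x|M. t\<^sup>2 * (h x * h x))"
    unfolding H_inner_def by (intro Bochner_Integration.integral_cong refl) (simp add: power2_eq_square mult_ac)
  also have "\<dots> = t\<^sup>2 * ip h h" unfolding H_inner_def by (rule integral_mult_right_zero)
  finally show ?thesis .
qed

lemma P_scale: assumes h: "inH \<alpha> \<beta> h" shows "P (\<lambda>x. t * h x) (\<lambda>x. t * h x) = t\<^sup>2 * P h h"
proof -
  have e: "F (\<lambda>x. t * h x) = (\<lambda>x. t * F h x)" by (intro ext F_scale h)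
  have "P (\<lambda>x. t * h x) (\<lambda>x. t * h x) = (LINT x|M. t\<^sup>2 * (F h x * h x))"
    unfolding H_inner_def e by (intro Bochner_Integration.integral_cong refl) (simp add: power2_eq_square mult_ac)
  also have "\<dots> = t\<^sup>2 * P h h" unfolding H_inner_def by (rule integral_mult_right_zero)
  finally show ?thesis .
qed

lemma V_scale: "V h \<Longrightarrow> V (\<lambda>x. t * h x)"
  using V_lin[of h h t 0] by simp

lemma P_le_sS: assumes V: "V h" shows "P h h \<le> sS * ip h h"
proof (cases "ip h h = 0")
  case True
  have h: "inH \<alpha> \<beta> h" by (rule V_inH[OF V])
  have "AE x in M. h x = 0" by (rule ip_zero_AE[OF h True])
  then have "ip h (F h) = 0" by (rule ip_AE_zero)
  then have "P h h = 0" by (simp add: ip_sym)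
  then show ?thesis using True by simp
next
  case False
  have h: "inH \<alpha> \<beta> h" by (rule V_inH[OF V])
  have pos: "ip h h > 0" using False ip_nonneg[of h] by simp
  define r where "r = 1 / sqrt (ip h h)"
  have r2: "r\<^sup>2 * ip h h = 1" using pos unfolding r_def by (simp add: power_divide)
  have "P (\<lambda>x. r * h x) (\<lambda>x. r * h x) \<le> sS"
    by (rule SS_upper[OF V_scale[OF V]]) (simp add: ip_scale2 r2)
  then have "r\<^sup>2 * P h h \<le> sS" by (simp add: P_scale[OF h])
  then have "r\<^sup>2 * P h h * ip h h \<le> sS * ip h h" using pos by (intro mult_right_mono) auto
  moreover have "r\<^sup>2 * P h h * ip h h = P h h" using r2 by (metis mult.commute mult.left_commute mult_1_right)
  ultimately show ?thesis by simp
qed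

lemma FF_le: assumes V: "V g" shows "ip (F g) (F g) \<le> sS * P g g"
proof -
  have g: "inH \<alpha> \<beta> g" by (rule V_inH[OF V])
  define h where "h = F g"
  have Vh: "V h" unfolding h_def by (rule V_F[OF V])
  have hH: "inH \<alpha> \<beta> h" by (rule V_inH[OF Vh])
  have "(P g h)\<^sup>2 \<le> P g g * P h h" by (rule CS_P[OF g hH])
  also have "\<dots> \<le> P g g * (sS * ip h h)" by (intro mult_left_mono P_le_sS Vh P_nonneg g)
  finally have *: "(ip h h)\<^sup>2 \<le> P g g * (sS * ip h h)" unfolding h_def .
  show ?thesis
  proof (cases "ip h h = 0")
    case True
    then show ?thesis using sS_nonneg P_nonneg[OF g] unfolding h_def by simp
  next
    case False
    then have pos: "ip h h > 0" using ip_nonneg[of h] by simp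
    from * have "ip h h * ip h h \<le> (sS * P g g) * ip h h" by (simp add: power2_eq_square mult_ac)
    then have "ip h h \<le> sS * P g g" using pos by simp
    then show ?thesis unfolding h_def .
  qed
qed

lemma case_zero: assumes V: "V g" and s0: "sS = 0" shows "F g x = 0"
proof -
  have g: "inH \<alpha> \<beta> g" by (rule V_inH[OF V])
  have "P g g \<le> 0" using P_le_sS[OF V] s0 by simp
  then have "P g g = 0" using P_nonneg[OF g] by simp
  then show ?thesis by (rule P_zero_F[OF g])
qed

end

context jacpsi
begin

lemma dc_int:
  fixes f w :: "real \<Rightarrow> real" and sq :: "nat \<Rightarrow> real \<Rightarrow> real"
  assumes "f \<in> borel_measurable M" "\<And>i. sq i \<in> borel_measurable M"
    and "\<And>x. x \<in> space M \<Longrightarrow> (\<lambda>i. sq i x) \<longlonglongrightarrow> f x"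
    and "\<And>i x. x \<in> space M \<Longrightarrow> \<bar>sq i x\<bar> \<le> w x" and "integrable M w"
  shows "(\<lambda>i. LINT x|M. sq i x) \<longlonglongrightarrow> (LINT x|M. f x)"
proof -
  have "(\<lambda>i. integral\<^sup>L M (sq i)) \<longlonglongrightarrow> integral\<^sup>L M f"
    by (rule integral_dominated_convergence[OF assms(1,2,5)]) (auto intro!: AE_I2 assms(3,4))
  then show ?thesis by (simp add: eta_contract_eq)
qed

lemma L1_le_const: assumes g: "inH \<alpha> \<beta> g" and b: "\<And>x. x \<in> space M \<Longrightarrow> \<bar>g x\<bar> \<le> Bd"
  shows "L1 g \<le> W * Bd"
proof -
  have "L1 g \<le> (LINT x|M. Bd)"
    by (rule integral_mono) (auto intro: integrable_abs inH_int g int_const b)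
  then show ?thesis by simp
qed

lemma kern_bound: assumes x: "x \<in> space M" and y: "y \<in> space M"
  shows "\<bar>exp (c * (x * y - 1))\<bar> \<le> 1"
proof -
  have ax: "\<bar>x\<bar> < 1" and ay: "\<bar>y\<bar> < 1" using x y by auto
  have "\<bar>x\<bar> * \<bar>y\<bar> \<le> \<bar>x\<bar> * 1" using ay by (intro mult_left_mono) auto
  then have "\<bar>x * y\<bar> < 1" using ax by (simp add: abs_mult)
  then have "x * y - 1 \<le> 0" by (simp add: abs_less_iff)
  then have "c * (x * y - 1) \<le> 0" using c by (simp add: mult_nonneg_nonpos)
  then show ?thesis by simp
qed

end

context jacpsi
begin

lemma case_pos: assumes spos: "sS > 0" shows False
proof -
  have "\<forall>j. \<exists>g. V g \<and> ip g g \<le> 1 \<and> sS - inverse (real (Suc j)) < P g g"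
  proof
    fix j
    have "sS - inverse (real (Suc j)) < Sup SS" unfolding sS_def[symmetric] by simp
    then obtain x where "x \<in> SS" "sS - inverse (real (Suc j)) < x" using less_cSupD[OF SS_ne] by blast
    then show "\<exists>g. V g \<and> ip g g \<le> 1 \<and> sS - inverse (real (Suc j)) < P g g" unfolding SS_def by blast
  qed
  then obtain gs where gs: "\<And>j. V (gs j)" "\<And>j. ip (gs j) (gs j) \<le> 1"
      "\<And>j. sS - inverse (real (Suc j)) < P (gs j) (gs j)"
    by metis
  have gsH: "inH \<alpha> \<beta> (gs j)" for j by (rule V_inH[OF gs(1)])
  have Qle: "P (gs j) (gs j) \<le> sS" for j by (rule SS_upper[OF gs(1) gs(2)])
  have Qlim: "(\<lambda>j. P (gs j) (gs j)) \<longlonglongrightarrow> sS"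
  proof (rule tendsto_sandwich[of "\<lambda>j. sS - inverse (real (Suc j))" _ _ "\<lambda>j. sS"])
    show "\<forall>\<^sub>F j in sequentially. sS - inverse (real (Suc j)) \<le> P (gs j) (gs j)"
      using gs(3) by (intro always_eventually allI less_imp_le) 
    show "\<forall>\<^sub>F j in sequentially. P (gs j) (gs j) \<le> sS" using Qle by (intro always_eventually allI)
    show "(\<lambda>j. sS - inverse (real (Suc j))) \<longlonglongrightarrow> sS"
      using tendsto_diff[OF tendsto_const LIMSEQ_inverse_real_of_nat, of sS] by simp
  qed (rule tendsto_const)
  define Bd where "Bd = sqrt W"
  have L1b: "L1 (gs j) \<le> Bd" for j
  proof -
    have "(L1 (gs j))\<^sup>2 \<le> W * ip (gs j) (gs j)" by (rule L1_sq[OF gsH])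
    also have "\<dots> \<le> W * 1" using gs(2) W_nonneg by (intro mult_left_mono) auto
    finally show ?thesis unfolding Bd_def by (intro real_le_rsqrt) simp
  qed
  have mb: "\<bar>mom M k (gs j)\<bar> \<le> Bd" for j k by (rule order_trans[OF mom_bound[OF gsH[of j]] L1b])
  obtain r where r: "strict_mono r" and conv: "\<And>k. convergent (\<lambda>j. mom M k (gs (r j)))"
    using diag_extract[of "\<lambda>j k. mom M k (gs j)" Bd] mb by blast
  define bb where "bb k = lim (\<lambda>j. mom M k (gs (r j)))" for k
  have blim: "(\<lambda>j. mom M k (gs (r j))) \<longlonglongrightarrow> bb k" for k
    unfolding bb_def using conv convergent_LIMSEQ_iff by blast
  have bbb: "\<bar>bb k\<bar> \<le> Bd" for k
    by (rule LIMSEQ_le_const2[OF tendsto_rabs[OF blim]]) (use mb in auto)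
  define g where "g j = gs (r j)" for j
  define Fj where "Fj j = F (g j)" for j
  define Fl where "Fl x = (\<Sum>k. ak c k * x^k * bb k)" for x
  have gH: "inH \<alpha> \<beta> (g j)" for j unfolding g_def by (rule gsH)
  have gV: "V (g j)" for j unfolding g_def by (rule gs(1))
  have gn: "ip (g j) (g j) \<le> 1" for j unfolding g_def by (rule gs(2))
  have FjH: "inH \<alpha> \<beta> (Fj j)" for j unfolding Fj_def by (rule F_inH[OF gH])
  have FjV: "V (Fj j)" for j unfolding Fj_def by (rule V_F[OF gV])
  have Q: "(\<lambda>j. P (g j) (g j)) \<longlonglongrightarrow> sS"
    using LIMSEQ_subseq_LIMSEQ[OF Qlim r] unfolding g_def by (simp add: o_def)
  have Fjb: "\<bar>Fj j x\<bar> \<le> Bd" if "x \<in> space M" for j x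
  proof -
    have "\<bar>Fj j x\<bar> \<le> L1 (g j)" unfolding Fj_def using that by (intro F_bound gH) (auto simp: abs_le_iff)
    then show ?thesis using L1b unfolding g_def by (meson order_trans)
  qed
  have Fjlim: "(\<lambda>j. Fj j x) \<longlonglongrightarrow> Fl x" if x: "\<bar>x\<bar> \<le> 1" for x
  proof -
    have "eventually (\<lambda>n. summable (\<lambda>k. norm (ak c k * x^k * mom M k (g n)))) sequentially \<and>
          summable (\<lambda>n. norm (ak c n * x^n * bb n)) \<and>
          ((\<lambda>n. suminf (\<lambda>k. ak c k * x^k * mom M k (g n))) \<longlonglongrightarrow> suminf (\<lambda>k. ak c k * x^k * bb k))"
    proof (rule tannerys_theorem[where M = "\<lambda>k. ak c k * Bd"])
      fix k
      show "(\<lambda>n. ak c k * x^k * mom M k (g n)) \<longlonglongrightarrow> ak c k * x^k * bb k"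
        unfolding g_def by (intro tendsto_mult tendsto_const blim)
    next
      show "\<forall>\<^sub>F (k, n) in at_top \<times>\<^sub>F sequentially. norm (ak c k * x^k * mom M k (g n)) \<le> ak c k * Bd"
      proof (rule always_eventually, safe)
        fix k n
        have "\<bar>x\<bar>^k \<le> 1" using x by (intro power_le_one) auto
        moreover have "\<bar>mom M k (g n)\<bar> \<le> Bd" unfolding g_def by (rule mb)
        ultimately have "\<bar>x\<bar>^k * \<bar>mom M k (g n)\<bar> \<le> 1 * Bd" by (intro mult_mono) auto
        then have "ak c k * (\<bar>x\<bar>^k * \<bar>mom M k (g n)\<bar>) \<le> ak c k * (1 * Bd)"
          using ak_pos[of k] by (intro mult_left_mono) auto
        then show "norm (ak c k * x^k * mom M k (g n)) \<le> ak c k * Bd"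
          using ak_pos[of k] by (simp add: abs_mult power_abs mult.assoc)
      qed
    next
      show "summable (\<lambda>k. ak c k * Bd)" using ak_sums by (intro summable_mult2 sums_summable)
    qed simp
    then have "(\<lambda>n. suminf (\<lambda>k. ak c k * x^k * mom M k (g n))) \<longlonglongrightarrow> Fl x" unfolding Fl_def by blast
    moreover have "\<And>n. suminf (\<lambda>k. ak c k * x^k * mom M k (g n)) = Fj n x"
      unfolding Fj_def using F_eq[OF gH] by simp
    ultimately show ?thesis by simp
  qed
  have Fjlim': "(\<lambda>j. Fj j x) \<longlonglongrightarrow> Fl x" if "x \<in> space M" for x
    using that by (intro Fjlim) (auto simp: abs_le_iff)
  have Fjm: "Fj j \<in> borel_measurable M" for j by (rule inH_meas[OF FjH])
  have Flm: "Fl \<in> borel_measurable M"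
    by (rule borel_measurable_LIMSEQ_real[OF Fjlim' Fjm])
  have Flb: "\<bar>Fl x\<bar> \<le> Bd" if x: "x \<in> space M" for x
    by (rule LIMSEQ_le_const2[OF tendsto_rabs[OF Fjlim'[OF x]]]) (use Fjb[OF x] in auto)
  have FlH: "inH \<alpha> \<beta> Fl" by (rule inH_bounded[OF Flm Flb])
  have psiint: "integrable M (\<lambda>x. Bd * \<bar>\<psi> n x\<bar>)" for n
    by (intro integrable_mult_right integrable_abs inH_int psi_inH)
  have FlV: "V Fl"
  proof -
    have "ip Fl (\<psi> n) = 0" for n
    proof -
      have "(\<lambda>j. LINT x|M. Fj j x * \<psi> n x) \<longlonglongrightarrow> (LINT x|M. Fl x * \<psi> n x)"
      proof (rule dc_int[OF _ _ _ _ psiint[of n]])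
        show "(\<lambda>x. Fl x * \<psi> n x) \<in> borel_measurable M"
          using Flm inH_meas[OF psi_inH] by (rule borel_measurable_times)
        show "(\<lambda>x. Fj j x * \<psi> n x) \<in> borel_measurable M" for j
          using Fjm inH_meas[OF psi_inH] by (rule borel_measurable_times)
        show "(\<lambda>j. Fj j x * \<psi> n x) \<longlonglongrightarrow> Fl x * \<psi> n x" if "x \<in> space M" for x
          by (intro tendsto_mult tendsto_const Fjlim'[OF that])
        show "\<bar>Fj j x * \<psi> n x\<bar> \<le> Bd * \<bar>\<psi> n x\<bar>" if "x \<in> space M" for j x
          using Fjb[OF that, of j] by (simp add: abs_mult mult_right_mono)
      qed
      moreover have "(LINT x|M. Fj j x * \<psi> n x) = 0" for j
        using FjV[of j] unfolding V_def H_inner_def by blast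
      ultimately have "(\<lambda>j. 0::real) \<longlonglongrightarrow> (LINT x|M. Fl x * \<psi> n x)" by simp
      then show ?thesis unfolding H_inner_def using LIMSEQ_unique[OF _ tendsto_const] by metis
    qed
    then show ?thesis using FlH unfolding V_def by blast
  qed
  have kern_m: "(\<lambda>y. exp (c * (x * y - 1))) \<in> borel_measurable M" for x
    by (rule meas_borel) measurable
  have FFlim: "(\<lambda>j. F (Fj j) x) \<longlonglongrightarrow> F Fl x" if x: "x \<in> space M" for x
    unfolding Fc_def
  proof (rule dc_int[OF _ _ _ _ int_const[of Bd]])
    show "(\<lambda>y. exp (c * (x * y - 1)) * Fl y) \<in> borel_measurable M"
      using kern_m Flm by (rule borel_measurable_times)
    show "(\<lambda>y. exp (c * (x * y - 1)) * Fj j y) \<in> borel_measurable M" for j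
      using kern_m Fjm by (rule borel_measurable_times)
    show "(\<lambda>j. exp (c * (x * y - 1)) * Fj j y) \<longlonglongrightarrow> exp (c * (x * y - 1)) * Fl y" if "y \<in> space M" for y
      by (intro tendsto_mult tendsto_const Fjlim'[OF that])
    show "\<bar>exp (c * (x * y - 1)) * Fj j y\<bar> \<le> Bd" if y: "y \<in> space M" for j y
    proof -
      have "\<bar>exp (c * (x * y - 1))\<bar> * \<bar>Fj j y\<bar> \<le> 1 * Bd"
        using kern_bound[OF x y] Fjb[OF y, of j] by (intro mult_mono) auto
      then show ?thesis by (simp add: abs_mult)
    qed
  qed
  define C where "C = W * Bd + sS * Bd"
  define EF where "EF j x = F (Fj j) x - sS * Fj j x" for j x
  define EL where "EL x = F Fl x - sS * Fl x" for x
  have Bd0: "0 \<le> Bd" unfolding Bd_def by simp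
  have EFb: "\<bar>EF j x\<bar> \<le> C" if x: "x \<in> space M" for j x
  proof -
    have "\<bar>F (Fj j) x\<bar> \<le> L1 (Fj j)" using x by (intro F_bound FjH) (auto simp: abs_le_iff)
    also have "\<dots> \<le> W * Bd" by (intro L1_le_const FjH Fjb)
    finally have 1: "\<bar>F (Fj j) x\<bar> \<le> W * Bd" .
    have "\<bar>sS * Fj j x\<bar> \<le> sS * Bd" using Fjb[OF x, of j] spos by (simp add: abs_mult)
    then show ?thesis using 1 unfolding EF_def C_def by linarith
  qed
  have EFm: "EF j \<in> borel_measurable M" for j
    unfolding EF_def by (intro borel_measurable_diff borel_measurable_times borel_measurable_const F_meas FjH Fjm)
  have ELm: "EL \<in> borel_measurable M"
    unfolding EL_def by (intro borel_measurable_diff borel_measurable_times borel_measurable_const F_meas FlH Flm)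
  have Dlim: "(\<lambda>j. LINT x|M. EF j x * EF j x) \<longlonglongrightarrow> (LINT x|M. EL x * EL x)"
  proof (rule dc_int[OF _ _ _ _ int_const[of "C * C"]])
    show "(\<lambda>x. EL x * EL x) \<in> borel_measurable M" using ELm ELm by (rule borel_measurable_times)
    show "(\<lambda>x. EF j x * EF j x) \<in> borel_measurable M" for j using EFm EFm by (rule borel_measurable_times)
    show "(\<lambda>j. EF j x * EF j x) \<longlonglongrightarrow> EL x * EL x" if x: "x \<in> space M" for x
    proof -
      have "(\<lambda>j. EF j x) \<longlonglongrightarrow> EL x" unfolding EF_def EL_def
        by (intro tendsto_diff tendsto_mult tendsto_const FFlim[OF x] Fjlim'[OF x])
      then show ?thesis by (intro tendsto_mult)
    qed
    show "\<bar>EF j x * EF j x\<bar> \<le> C * C" if x: "x \<in> space M" for j x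
    proof -
      have "\<bar>EF j x\<bar> * \<bar>EF j x\<bar> \<le> C * C" using EFb[OF x, of j] by (intro mult_mono) auto
      then show ?thesis by (simp add: abs_mult)
    qed
  qed
  have Dle: "(LINT x|M. EF j x * EF j x) \<le> sS * (sS * (sS * (sS - P (g j) (g j))))" for j
  proof -
    define u where "u = (\<lambda>y. 1 * Fj j y + (-sS) * g j y)"
    have uV: "V u" unfolding u_def by (intro V_lin FjV gV)
    have uH: "inH \<alpha> \<beta> u" by (rule V_inH[OF uV])
    have Fu: "F u = EF j"
    proof
      fix x
      show "F u x = EF j x" unfolding u_def EF_def
        using F_lin[OF FjH[of j] gH[of j], of 1 "-sS" x] unfolding Fj_def by simp
    qed
    have "(LINT x|M. EF j x * EF j x) = ip (F u) (F u)" unfolding Fu H_inner_def ..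
    also have "\<dots> \<le> sS * P u u" by (rule FF_le[OF uV])
    also have "\<dots> \<le> sS * (sS * ip u u)" using sS_nonneg by (intro mult_left_mono P_le_sS uV)
    also have "ip u u \<le> sS * (sS - P (g j) (g j))"
    proof -
      have e1: "ip u u = 1 * ip (Fj j) u + (-sS) * ip (g j) u"
        unfolding u_def by (intro ip_lin FjH gH uH[unfolded u_def])
      have e2: "ip (Fj j) u = 1 * ip (Fj j) (Fj j) + (-sS) * ip (g j) (Fj j)"
        using ip_sym[of "Fj j" u] ip_lin[OF FjH[of j] gH[of j] FjH[of j], of 1 "-sS"] unfolding u_def by simp
      have e3: "ip (g j) u = 1 * ip (Fj j) (g j) + (-sS) * ip (g j) (g j)"
        using ip_sym[of "g j" u] ip_lin[OF FjH[of j] gH[of j] gH[of j], of 1 "-sS"] unfolding u_def by simp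
      have e4: "ip (Fj j) (g j) = P (g j) (g j)" unfolding Fj_def ..
      have e5: "ip (g j) (Fj j) = P (g j) (g j)" unfolding Fj_def by (rule ip_sym)
      have N: "ip (Fj j) (Fj j) \<le> sS * P (g j) (g j)" unfolding Fj_def by (rule FF_le[OF gV])
      have G: "sS * sS * ip (g j) (g j) \<le> sS * sS * 1" using gn[of j] sS_nonneg by (intro mult_left_mono) auto
      have "ip u u = ip (Fj j) (Fj j) - 2 * sS * P (g j) (g j) + sS * sS * ip (g j) (g j)"
        unfolding e1 e2 e3 e4 e5 by (simp add: algebra_simps)
      also have "\<dots> \<le> sS * P (g j) (g j) - 2 * sS * P (g j) (g j) + sS * sS * 1" using N G by linarith
      also have "\<dots> = sS * (sS - P (g j) (g j))" by (simp add: algebra_simps)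
      finally show ?thesis .
    qed
    then have "sS * (sS * ip u u) \<le> sS * (sS * (sS * (sS - P (g j) (g j))))"
      using sS_nonneg by (intro mult_left_mono) auto
    finally show ?thesis .
  qed
  have Dnn: "0 \<le> (LINT x|M. EF j x * EF j x)" for j using ip_nonneg[of "EF j"] unfolding H_inner_def .
  have D0: "(\<lambda>j. LINT x|M. EF j x * EF j x) \<longlonglongrightarrow> 0"
  proof (rule tendsto_sandwich[of "\<lambda>j. 0" _ _ "\<lambda>j. sS * (sS * (sS * (sS - P (g j) (g j))))"])
    show "\<forall>\<^sub>F j in sequentially. 0 \<le> (LINT x|M. EF j x * EF j x)" using Dnn by (intro always_eventually allI)
    show "\<forall>\<^sub>F j in sequentially. (LINT x|M. EF j x * EF j x) \<le> sS * (sS * (sS * (sS - P (g j) (g j))))"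
      using Dle by (intro always_eventually allI)
    show "(\<lambda>j. sS * (sS * (sS * (sS - P (g j) (g j))))) \<longlonglongrightarrow> 0"
      using tendsto_mult[OF tendsto_const[of "sS * (sS * sS)"] tendsto_diff[OF tendsto_const[of sS] Q]]
      by (simp add: mult_ac)
  qed (rule tendsto_const)
  have "(LINT x|M. EL x * EL x) = 0" using LIMSEQ_unique[OF Dlim D0] .
  then have "ip EL EL = 0" unfolding H_inner_def .
  moreover have ELH: "inH \<alpha> \<beta> EL" unfolding EL_def by (intro inH_diff inH_scale F_inH FlH)
  ultimately have "AE x in M. EL x = 0" by (intro ip_zero_AE)
  then have eigAE: "AE x in M. F Fl x = sS * Fl x" unfolding EL_def by eventually_elim simp
  have NNlim: "(\<lambda>j. LINT x|M. Fj j x * Fj j x) \<longlonglongrightarrow> (LINT x|M. Fl x * Fl x)"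
  proof (rule dc_int[OF _ _ _ _ int_const[of "Bd * Bd"]])
    show "(\<lambda>x. Fl x * Fl x) \<in> borel_measurable M" using Flm Flm by (rule borel_measurable_times)
    show "(\<lambda>x. Fj j x * Fj j x) \<in> borel_measurable M" for j using Fjm Fjm by (rule borel_measurable_times)
    show "(\<lambda>j. Fj j x * Fj j x) \<longlonglongrightarrow> Fl x * Fl x" if x: "x \<in> space M" for x
      by (intro tendsto_mult Fjlim'[OF x])
    show "\<bar>Fj j x * Fj j x\<bar> \<le> Bd * Bd" if x: "x \<in> space M" for j x
    proof -
      have "\<bar>Fj j x\<bar> * \<bar>Fj j x\<bar> \<le> Bd * Bd" using Fjb[OF x, of j] by (intro mult_mono) auto
      then show ?thesis by (simp add: abs_mult)
    qed
  qed
  have Qsq: "(P (g j) (g j))\<^sup>2 \<le> (LINT x|M. Fj j x * Fj j x)" for j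
  proof -
    have "(ip (Fj j) (g j))\<^sup>2 \<le> ip (Fj j) (Fj j) * ip (g j) (g j)" by (rule CS[OF FjH gH])
    also have "\<dots> \<le> ip (Fj j) (Fj j) * 1" using gn[of j] ip_nonneg[of "Fj j"] by (intro mult_left_mono) auto
    finally show ?thesis unfolding Fj_def H_inner_def by simp
  qed
  have "sS\<^sup>2 \<le> (LINT x|M. Fl x * Fl x)"
    by (rule LIMSEQ_le[OF tendsto_power[OF Q] NNlim]) (use Qsq in auto)
  then have Flpos: "ip Fl Fl > 0" unfolding H_inner_def using spos
    by (smt (verit) zero_less_power)
  have Flnz: "\<not> (AE x in M. Fl x = 0)"
  proof
    assume "AE x in M. Fl x = 0"
    then have "ip Fl Fl = 0" by (rule ip_AE_zero)
    then show False using Flpos by simp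
  qed
  obtain N aa where "AE x in M. Fl x = (\<Sum>k<N. aa k * \<psi> k x)"
    using alleig FlH eigAE Flnz by blast
  then have "ip Fl Fl = 0" using span_zero[OF FlH] FlV unfolding V_def by blast
  then show False using Flpos by simp
qed

end

context jacpsi
begin

lemma main_complete: assumes "V g" shows "F g x = 0"
proof (cases "sS = 0")
  case True then show ?thesis by (rule case_zero[OF assms])
next
  case False
  then have "sS > 0" using sS_nonneg by simp
  then show ?thesis using case_pos by blast
qed

lemma psi_LB_pre: "inH \<alpha> \<beta> (\<lambda>y. (1 / \<mu> n) * \<psi> n y) \<and> (\<forall>x\<in>{-1<..<1}. \<psi> n x = F (\<lambda>y. (1 / \<mu> n) * \<psi> n y) x)"
proof
  show "inH \<alpha> \<beta> (\<lambda>y. (1 / \<mu> n) * \<psi> n y)" by (intro inH_scale psi_inH)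
  show "\<forall>x\<in>{-1<..<1}. \<psi> n x = F (\<lambda>y. (1 / \<mu> n) * \<psi> n y) x"
  proof
    fix x :: real assume x: "x \<in> {-1<..<1}"
    have "F (\<lambda>y. (1 / \<mu> n) * \<psi> n y) x = (1 / \<mu> n) * F (\<psi> n) x" by (rule F_scale[OF psi_inH])
    also have "\<dots> = (1 / \<mu> n) * (\<mu> n * \<psi> n x)" using F_psi[of x n] x by simp
    also have "\<dots> = \<psi> n x" using mu_nz[of n] by simp
    finally show "\<psi> n x = F (\<lambda>y. (1 / \<mu> n) * \<psi> n y) x" by simp
  qed
qed

lemma psi_in_LB: "\<psi> n \<in> LB \<alpha> \<beta> c"
  unfolding LB_def using psi_LB_pre by blast

lemma LB_pre_prop: assumes "f \<in> LB \<alpha> \<beta> c"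
  shows "inH \<alpha> \<beta> (LB_pre \<alpha> \<beta> c f) \<and> (\<forall>x\<in>{-1<..<1}. f x = F (LB_pre \<alpha> \<beta> c f) x)"
proof -
  have "\<exists>g. inH \<alpha> \<beta> g \<and> (\<forall>x\<in>{-1<..<1}. f x = F g x)" using assms unfolding LB_def by blast
  then show ?thesis unfolding LB_pre_def by (rule someI_ex)
qed

lemma pre_psi: "AE x in M. LB_pre \<alpha> \<beta> c (\<psi> n) x = (1 / \<mu> n) * \<psi> n x"
proof (rule F_inj)
  have p: "inH \<alpha> \<beta> (LB_pre \<alpha> \<beta> c (\<psi> n)) \<and> (\<forall>x\<in>{-1<..<1}. \<psi> n x = F (LB_pre \<alpha> \<beta> c (\<psi> n)) x)"
    by (rule LB_pre_prop[OF psi_in_LB])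
  then show "inH \<alpha> \<beta> (LB_pre \<alpha> \<beta> c (\<psi> n))" by blast
  show "inH \<alpha> \<beta> (\<lambda>x. 1 / \<mu> n * \<psi> n x)" using psi_LB_pre by blast
  show "\<forall>x\<in>{-1<..<1}. F (LB_pre \<alpha> \<beta> c (\<psi> n)) x = F (\<lambda>x. 1 / \<mu> n * \<psi> n x) x"
    using p psi_LB_pre[of n] by auto
qed

lemma ip_cong_AE:
  assumes "inH \<alpha> \<beta> f" "inH \<alpha> \<beta> f'" "inH \<alpha> \<beta> g" "inH \<alpha> \<beta> g'"
    and "AE x in M. f x = f' x" "AE x in M. g x = g' x"
  shows "ip f g = ip f' g'"
  unfolding H_inner_def
proof (rule integral_cong_AE)
  show "(\<lambda>x. f x * g x) \<in> borel_measurable M" using inH_meas[OF assms(1)] inH_meas[OF assms(3)] by (rule borel_measurable_times)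
  show "(\<lambda>x. f' x * g' x) \<in> borel_measurable M" using inH_meas[OF assms(2)] inH_meas[OF assms(4)] by (rule borel_measurable_times)
  show "AE x in M. f x * g x = f' x * g' x" using assms(5,6) by eventually_elim simp
qed

lemma ip_scale_both: "ip (\<lambda>x. s * f x) (\<lambda>x. t * g x) = s * t * ip f g"
proof -
  have "ip (\<lambda>x. s * f x) (\<lambda>x. t * g x) = (LINT x|M. (s * t) * (f x * g x))"
    unfolding H_inner_def by (intro Bochner_Integration.integral_cong refl) (simp add: mult_ac)
  also have "\<dots> = s * t * ip f g" unfolding H_inner_def by (rule integral_mult_right_zero)
  finally show ?thesis .
qed

lemma LB_inner_psi: "LB_inner \<alpha> \<beta> c (\<psi> n) (\<psi> m) = (1 / \<mu> n) * (1 / \<mu> m) * ip (\<psi> n) (\<psi> m)"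
proof -
  have "LB_inner \<alpha> \<beta> c (\<psi> n) (\<psi> m) = ip (\<lambda>x. (1 / \<mu> n) * \<psi> n x) (\<lambda>x. (1 / \<mu> m) * \<psi> m x)"
    unfolding LB_inner_def
    by (rule ip_cong_AE[OF _ _ _ _ pre_psi pre_psi])
       (use LB_pre_prop[OF psi_in_LB] psi_LB_pre in blast)+
  also have "\<dots> = (1 / \<mu> n) * (1 / \<mu> m) * ip (\<psi> n) (\<psi> m)" by (rule ip_scale_both)
  finally show ?thesis .
qed

lemma final:
  shows "(\<forall>n. \<psi> n \<in> LB \<alpha> \<beta> c)
    \<and> (\<forall>n m. n \<noteq> m \<longrightarrow> LB_inner \<alpha> \<beta> c (\<psi> n) (\<psi> m) = 0)
    \<and> (\<forall>n. LB_inner \<alpha> \<beta> c (\<psi> n) (\<psi> n) \<noteq> 0)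
    \<and> (\<forall>f\<in>LB \<alpha> \<beta> c. (\<forall>n. LB_inner \<alpha> \<beta> c f (\<psi> n) = 0) \<longrightarrow> (\<forall>x\<in>{-1<..<1}. f x = 0))"
proof (intro conjI allI impI ballI)
  fix n show "\<psi> n \<in> LB \<alpha> \<beta> c" by (rule psi_in_LB)
next
  fix n m :: nat assume "n \<noteq> m"
  then show "LB_inner \<alpha> \<beta> c (\<psi> n) (\<psi> m) = 0" by (simp add: LB_inner_psi ip_psi_orth)
next
  fix n
  show "LB_inner \<alpha> \<beta> c (\<psi> n) (\<psi> n) \<noteq> 0"
    using mu_nz[of n] by (simp add: LB_inner_psi ip_psi_self power2_eq_square)
next
  fix f :: "real \<Rightarrow> real" and x :: real assume f: "f \<in> LB \<alpha> \<beta> c" and orth: "\<forall>n. LB_inner \<alpha> \<beta> c f (\<psi> n) = 0" and x: "x \<in> {-1<..<1}"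
  define g where "g = LB_pre \<alpha> \<beta> c f"
  have gp: "inH \<alpha> \<beta> g" "\<forall>x\<in>{-1<..<1}. f x = F g x" using LB_pre_prop[OF f] unfolding g_def by blast+
  have "ip g (\<psi> n) = 0" for n
  proof -
    have "0 = ip g (LB_pre \<alpha> \<beta> c (\<psi> n))" using orth unfolding LB_inner_def g_def by simp
    also have "\<dots> = ip (\<lambda>x. 1 * g x) (\<lambda>x. (1 / \<mu> n) * \<psi> n x)"
      by (rule ip_cong_AE[OF _ _ _ _ _ pre_psi]) (use gp(1) inH_scale[OF gp(1), of 1] LB_pre_prop[OF psi_in_LB] psi_LB_pre in auto)
    also have "\<dots> = 1 * (1 / \<mu> n) * ip g (\<psi> n)" by (rule ip_scale_both)
    finally show ?thesis using mu_nz[of n] by simp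
  qed
  then have "V g" using gp(1) unfolding V_def by blast
  then have "F g x = 0" by (rule main_complete)
  then show "f x = 0" using gp(2) x by simp
qed

end

theorem proposition1:
  fixes \<alpha> \<beta> c :: real and \<psi> :: "nat \<Rightarrow> real \<Rightarrow> real" and \<mu> :: "nat \<Rightarrow> real"
  assumes "\<alpha> > -1" and "\<beta> > -1" and "c > 0"
    and inH: "\<forall>n. inH \<alpha> \<beta> (\<psi> n)"
    and eig: "\<forall>n. \<forall>x\<in>{-1<..<1}. Fc \<alpha> \<beta> c (\<psi> n) x = \<mu> n * \<psi> n x"
    and nonzero: "\<forall>n. \<not> (AE x in jac_M \<alpha> \<beta>. \<psi> n x = 0)"
    and normalized: "\<forall>n m. H_inner \<alpha> \<beta> (\<psi> n) (\<psi> m) = (if m = n then (\<mu> n)\<^sup>2 else 0)"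
    and all_eigenfunctions:
      "\<forall>\<phi> lam. inH \<alpha> \<beta> \<phi> \<and> (AE x in jac_M \<alpha> \<beta>. Fc \<alpha> \<beta> c \<phi> x = lam * \<phi> x)
              \<and> \<not> (AE x in jac_M \<alpha> \<beta>. \<phi> x = 0)
         \<longrightarrow> (\<exists>N a. AE x in jac_M \<alpha> \<beta>. \<phi> x = (\<Sum>k<N. a k * \<psi> k x))"
  shows "(\<forall>n. \<psi> n \<in> LB \<alpha> \<beta> c)
    \<and> (\<forall>n m. n \<noteq> m \<longrightarrow> LB_inner \<alpha> \<beta> c (\<psi> n) (\<psi> m) = 0)
    \<and> (\<forall>n. LB_inner \<alpha> \<beta> c (\<psi> n) (\<psi> n) \<noteq> 0)
    \<and> (\<forall>f\<in>LB \<alpha> \<beta> c. (\<forall>n. LB_inner \<alpha> \<beta> c f (\<psi> n) = 0) \<longrightarrow> (\<forall>x\<in>{-1<..<1}. f x = 0))"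
proof -
  interpret jacpsi \<alpha> \<beta> c \<psi> \<mu>
    by unfold_locales (use assms in auto)
  show ?thesis by (rule final)
qed

end
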